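(* Let $\mathcal{H}\subseteq\{0,1\}^{\mathcal{X}}$ be a concept class and let $\omega_m$ denote the clique number of $G_m(\mathcal{H})$. Then exactly one of the following holds: (1) $\omega_m=2^m$ for all $m\in\mathbb{N}$; (2) there is a polynomial $P$ such that $\omega_m\le P(m)$ for all $m\in\mathbb{N}$.
   Context: For $m\in\mathbb{N}$, a dataset of size $m$ is a sequence $S=((x_1,y_1),\dots,(x_m,y_m))\in(\mathcal{X}\times\{0,1\})^m$; a hypothesis $h\in\{0,1\}^{\mathcal{X}}$ is consistent with $S$ if $h(x_i)=y_i$ for all $i$; $S$ is $\mathcal{H}$-realizable if some $h\in\mathcal{H}$ is consistent with $S$. We write $(x,y)\in S$ if $(x,y)=(x_i,y_i)$ for some $i$. Let $V_m(\mathcal{H})$ be the set of $\mathcal{H}$-realizable datasets of size $m$. The contradiction graph of order $m$, $G_m(\mathcal{H})$, is the undirected graph with vertex set $V_m(\mathcal{H})$ in which two datasets $S,S'$ are adjacent iff there is $x\in\mathcal{X}$ with $(x,0)\in S$ and $(x,1)\in S'$. The clique number of a graph is the supremum of the sizes of its cliques. *)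

theory Defs
  imports Main "HOL-Library.Extended_Nat" "HOL-Computational_Algebra.Polynomial"
begin

text \<open>A dataset of size m is a list of m labelled examples; labels 0/1 are False/True.\<close>

definition consistent :: "('x \<Rightarrow> bool) \<Rightarrow> ('x \<times> bool) list \<Rightarrow> bool" where
  "consistent h S \<longleftrightarrow> (\<forall>i<length S. h (fst (S ! i)) = snd (S ! i))"

definition realizable :: "('x \<Rightarrow> bool) set \<Rightarrow> ('x \<times> bool) list \<Rightarrow> bool" where
  "realizable H S \<longleftrightarrow> (\<exists>h\<in>H. consistent h S)"

definition realizable_datasets :: "('x \<Rightarrow> bool) set \<Rightarrow> nat \<Rightarrow> ('x \<times> bool) list set" where
  "realizable_datasets H m = {S. length S = m \<and> realizable H S}"

definition contradicts :: "('x \<times> bool) list \<Rightarrow> ('x \<times> bool) list \<Rightarrow> bool" where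
  "contradicts S S' \<longleftrightarrow>
     (\<exists>x. ((x, False) \<in> set S \<and> (x, True) \<in> set S') \<or> ((x, False) \<in> set S' \<and> (x, True) \<in> set S))"

definition is_clique :: "('x \<Rightarrow> bool) set \<Rightarrow> nat \<Rightarrow> ('x \<times> bool) list set \<Rightarrow> bool" where
  "is_clique H m C \<longleftrightarrow> C \<subseteq> realizable_datasets H m \<and>
     (\<forall>S\<in>C. \<forall>S'\<in>C. S \<noteq> S' \<longrightarrow> contradicts S S')"

text \<open>Clique number of G_m(H): supremum of clique sizes (possibly infinite).
  An infinite clique contains finite cliques of every size, so finite cliques suffice.\<close>
definition clique_number :: "('x \<Rightarrow> bool) set \<Rightarrow> nat \<Rightarrow> enat" where
  "clique_number H m = Sup {enat (card C) | C. finite C \<and> is_clique H m C}"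

end

theory Submission imports Defs begin

definition conf :: "('x \<times> bool) set \<Rightarrow> ('x \<times> bool) set \<Rightarrow> bool" where
  "conf S S' \<longleftrightarrow> (\<exists>x y. (x,y) \<in> S \<and> (x, \<not> y) \<in> S')"
definition cons :: "('x \<times> bool) set \<Rightarrow> bool" where
  "cons S \<longleftrightarrow> (\<forall>x y y'. (x,y) \<in> S \<longrightarrow> (x,y') \<in> S \<longrightarrow> y = y')"
definition pclique :: "('x \<times> bool) set set \<Rightarrow> bool" where
  "pclique C \<longleftrightarrow> (\<forall>S\<in>C. \<forall>S'\<in>C. S \<noteq> S' \<longrightarrow> conf S S')"

lemma consD: "cons S \<Longrightarrow> (x,y) \<in> S \<Longrightarrow> (x,y') \<in> S \<Longrightarrow> y = y'"
  unfolding cons_def by blast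

lemma cons_subset: "cons S \<Longrightarrow> T \<subseteq> S \<Longrightarrow> cons T"
  unfolding cons_def by blast

lemma conf_self: "cons S \<Longrightarrow> \<not> conf S S"
proof
  assume c: "cons S" and "conf S S"
  then obtain x y where "(x,y) \<in> S" "(x, \<not> y) \<in> S" unfolding conf_def by blast
  then have "y = (\<not> y)" using consD[OF c] by blast
  then show False by simp
qed

lemma kraft:
  assumes "finite D"
  shows "\<forall>C. finite C \<and> (\<forall>S\<in>C. finite S \<and> fst ` S \<subseteq> D \<and> cons S) \<and> pclique C \<longrightarrow>
     (\<Sum>S\<in>C. (1/2::real) ^ card (fst ` S)) \<le> 1"
  using assms
proof (induction D rule: finite_induct)
  case empty
  show ?case
  proof (intro allI impI)
    fix C :: "('a \<times> bool) set set"
    assume h: "finite C \<and> (\<forall>S\<in>C. finite S \<and> fst ` S \<subseteq> {} \<and> cons S) \<and> pclique C"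
    then have "C \<subseteq> {{}}" by auto
    then have "C = {} \<or> C = {{}}" by auto
    then show "(\<Sum>S\<in>C. (1/2::real) ^ card (fst ` S)) \<le> 1" by auto
  qed
next
  case (insert x D)
  show ?case
  proof (intro allI impI)
    fix C :: "('a \<times> bool) set set"
    assume h: "finite C \<and> (\<forall>S\<in>C. finite S \<and> fst ` S \<subseteq> insert x D \<and> cons S) \<and> pclique C"
    define rm where "rm S = {p \<in> S. fst p \<noteq> x}" for S :: "('a \<times> bool) set"
    define Cs where "Cs = {S\<in>C. x \<notin> fst ` S}"
    define Cb where "Cb b = {S\<in>C. (x,b) \<in> S}" for b
    define w where "w S = (1/2::real) ^ card (fst ` S)" for S :: "('a \<times> bool) set"
    have fin: "finite C" using h by blast
    have hC: "\<forall>S\<in>C. finite S \<and> fst ` S \<subseteq> insert x D \<and> cons S" using h by blast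
    have hp: "pclique C" using h by blast
    have key: "2 * (\<Sum>S\<in>Cb b. w S) + (\<Sum>S\<in>Cs. w S) \<le> 1" for b
    proof -
      have disj: "Cb b \<inter> Cs = {}" unfolding Cb_def Cs_def by force
      have sub: "Cb b \<union> Cs \<subseteq> C" unfolding Cb_def Cs_def by auto
      have confrm: "conf (rm S1) (rm S2)" if "S1 \<in> Cb b \<union> Cs" "S2 \<in> Cb b \<union> Cs" "S1 \<noteq> S2" for S1 S2
      proof -
        have inC: "S1 \<in> C" "S2 \<in> C" using that(1,2) sub by blast+
        have "conf S1 S2" using hp inC that(3) unfolding pclique_def by blast
        then obtain z y where z: "(z,y) \<in> S1" "(z, \<not> y) \<in> S2"
          unfolding conf_def by blast
        have c1: "cons S1" "cons S2" using hC inC by blast+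
        have "z \<noteq> x"
        proof
          assume zx: "z = x"
          have "x \<in> fst ` S1" "x \<in> fst ` S2" using z zx by force+
          then have "S1 \<notin> Cs" "S2 \<notin> Cs" unfolding Cs_def by blast+
          then have "(x,b) \<in> S1" "(x,b) \<in> S2" using that(1,2) unfolding Cb_def by blast+
          then have "y = b" "(\<not> y) = b" using z zx consD[OF c1(1)] consD[OF c1(2)] by blast+
          then show False by simp
        qed
        then show ?thesis using z unfolding conf_def rm_def by auto
      qed
      have consrm: "cons (rm S)" if "S \<in> C" for S
        using hC that cons_subset[of S "rm S"] unfolding rm_def by blast
      have inj: "inj_on rm (Cb b \<union> Cs)"
      proof (rule inj_onI, rule ccontr)
        fix S1 S2 assume a: "S1 \<in> Cb b \<union> Cs" "S2 \<in> Cb b \<union> Cs" "rm S1 = rm S2" "S1 \<noteq> S2"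
        then have "conf (rm S1) (rm S1)" using confrm by metis
        moreover have "S1 \<in> C" using a sub by blast
        ultimately show False using conf_self consrm by blast
      qed
      have IH: "(\<Sum>S\<in>rm ` (Cb b \<union> Cs). w S) \<le> 1"
        unfolding w_def
      proof (rule insert.IH[rule_format])
        show "finite (rm ` (Cb b \<union> Cs)) \<and> (\<forall>S\<in>rm ` (Cb b \<union> Cs). finite S \<and> fst ` S \<subseteq> D \<and> cons S) \<and> pclique (rm ` (Cb b \<union> Cs))"
        proof (intro conjI ballI)
          show "finite (rm ` (Cb b \<union> Cs))" using fin sub by (meson finite_imageI finite_subset)
          show "pclique (rm ` (Cb b \<union> Cs))" unfolding pclique_def using confrm by blast
        next
          fix S assume "S \<in> rm ` (Cb b \<union> Cs)"
          then obtain S0 where S0: "S0 \<in> C" "S = rm S0" using sub by blast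
          show "finite S" using S0 h unfolding rm_def by auto
          show "fst ` S \<subseteq> D" using S0 h unfolding rm_def by auto
          show "cons S" using S0 consrm by auto
        qed
      qed
      have eq1: "(\<Sum>S\<in>rm ` (Cb b \<union> Cs). w S) = (\<Sum>S\<in>Cb b \<union> Cs. w (rm S))"
        using sum.reindex[OF inj] by simp
      have wb: "w (rm S) = 2 * w S" if "S \<in> Cb b" for S
      proof -
        have fS: "finite (fst ` S)" using that h unfolding Cb_def by auto
        have "fst ` rm S = fst ` S - {x}" unfolding rm_def by auto
        moreover have xin: "x \<in> fst ` S" using that unfolding Cb_def by force
        ultimately have "card (fst ` rm S) = card (fst ` S) - 1" using fS by simp
        moreover have "card (fst ` S) > 0" using fS xin by (auto simp: card_gt_0_iff)
        ultimately have "card (fst ` S) = Suc (card (fst ` rm S))" by simp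
        then show ?thesis unfolding w_def by simp
      qed
      have ws: "w (rm S) = w S" if "S \<in> Cs" for S
      proof -
        have "rm S = S" using that unfolding rm_def Cs_def by force
        then show ?thesis by simp
      qed
      have "(\<Sum>S\<in>Cb b \<union> Cs. w (rm S)) = (\<Sum>S\<in>Cb b. w (rm S)) + (\<Sum>S\<in>Cs. w (rm S))"
        using disj fin sub by (meson finite_Un finite_subset sum.union_disjoint)
      also have "\<dots> = 2 * (\<Sum>S\<in>Cb b. w S) + (\<Sum>S\<in>Cs. w S)"
        using wb ws by (simp add: sum_distrib_left)
      finally show ?thesis using IH eq1 by simp
    qed
    have split: "C = Cb True \<union> Cb False \<union> Cs"
    proof
      show "Cb True \<union> Cb False \<union> Cs \<subseteq> C" unfolding Cb_def Cs_def by blast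
      show "C \<subseteq> Cb True \<union> Cb False \<union> Cs"
      proof
        fix S assume S: "S \<in> C"
        show "S \<in> Cb True \<union> Cb False \<union> Cs"
        proof (cases "x \<in> fst ` S")
          case True
          then obtain y where "(x,y) \<in> S" by force
          then show ?thesis using S unfolding Cb_def by (cases y) auto
        next
          case False
          then show ?thesis using S unfolding Cs_def by blast
        qed
      qed
    qed
    have d1: "Cb True \<inter> Cb False = {}"
    proof (rule ccontr)
      assume "Cb True \<inter> Cb False \<noteq> {}"
      then obtain S where "S \<in> C" "(x,True) \<in> S" "(x,False) \<in> S" unfolding Cb_def by blast
      then show False using h consD[of S x True False] by blast
    qed
    have d2: "(Cb True \<union> Cb False) \<inter> Cs = {}" unfolding Cb_def Cs_def by force
    have fins: "finite (Cb True)" "finite (Cb False)" "finite Cs"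
      using fin unfolding Cb_def Cs_def by auto
    have "(\<Sum>S\<in>C. w S) = (\<Sum>S\<in>Cb True. w S) + (\<Sum>S\<in>Cb False. w S) + (\<Sum>S\<in>Cs. w S)"
      by (subst split, simp add: sum.union_disjoint fins d1 d2)
    then show "(\<Sum>S\<in>C. (1/2::real) ^ card (fst ` S)) \<le> 1"
      using key[of True] key[of False] unfolding w_def by simp
  qed
qed


fun ldim_ge :: "('x \<Rightarrow> bool) set \<Rightarrow> nat \<Rightarrow> bool" where
  "ldim_ge H 0 = (H \<noteq> {})"
| "ldim_ge H (Suc k) = (\<exists>x. ldim_ge {h\<in>H. \<not> h x} k \<and> ldim_ge {h\<in>H. h x} k)"

declare ldim_ge.simps[simp del]

lemma ldim_0: "ldim_ge H 0 = (H \<noteq> {})" by (rule ldim_ge.simps(1))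
lemma ldim_S: "ldim_ge H (Suc k) = (\<exists>x. ldim_ge {h\<in>H. \<not> h x} k \<and> ldim_ge {h\<in>H. h x} k)"
  by (rule ldim_ge.simps(2))

lemma ldim_Suc_mono: "ldim_ge H (Suc k) \<Longrightarrow> ldim_ge H k"
proof (induction k arbitrary: H)
  case 0
  then obtain x where "ldim_ge {h\<in>H. \<not> h x} 0" unfolding ldim_S by blast
  then have "{h\<in>H. \<not> h x} \<noteq> {}" unfolding ldim_0 .
  then show ?case unfolding ldim_0 by blast
next
  case (Suc k)
  then obtain x where "ldim_ge {h\<in>H. \<not> h x} (Suc k)" "ldim_ge {h\<in>H. h x} (Suc k)"
    unfolding ldim_S[of H "Suc k"] by blast
  then have "ldim_ge {h\<in>H. \<not> h x} k" "ldim_ge {h\<in>H. h x} k" using Suc.IH by blast+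
  then show ?case unfolding ldim_S[of H k] by blast
qed

definition rset :: "('x \<Rightarrow> bool) set \<Rightarrow> ('x \<times> bool) set \<Rightarrow> bool" where
  "rset H S \<longleftrightarrow> (\<exists>h\<in>H. \<forall>p\<in>S. h (fst p) = snd p)"

lemma rset_cons: "rset H S \<Longrightarrow> cons S"
  unfolding rset_def cons_def by (metis fst_conv snd_conv)

lemma ldim_bound:
  assumes "\<not> ldim_ge H (Suc d)" "finite C" "\<forall>S\<in>C. finite S \<and> card (fst ` S) \<le> m \<and> rset H S"
    "pclique C"
  shows "card C \<le> (2*m+1)^d"
  using assms
proof (induction d arbitrary: H C)
  case 0
  have "\<forall>S1\<in>C. \<forall>S2\<in>C. S1 = S2"
  proof (intro ballI, rule ccontr)
    fix S1 S2 assume s: "S1 \<in> C" "S2 \<in> C" "S1 \<noteq> S2"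
    then obtain z y where z: "(z,y) \<in> S1" "(z, \<not> y) \<in> S2"
      using 0 unfolding pclique_def conf_def by blast
    have "rset H S1" "rset H S2" using s 0(3) by blast+
    then obtain h1 h2 where "h1 \<in> H" "\<forall>p\<in>S1. h1 (fst p) = snd p" "h2 \<in> H" "\<forall>p\<in>S2. h2 (fst p) = snd p"
      unfolding rset_def by blast
    then have h1: "h1 \<in> H" "h1 z = y" and h2: "h2 \<in> H" "h2 z = (\<not> y)" using z by force+
    have "{h\<in>H. \<not> h z} \<noteq> {}" "{h\<in>H. h z} \<noteq> {}" using h1 h2 by (cases y; auto)+
    then have "ldim_ge H (Suc 0)" unfolding ldim_S ldim_0 by blast
    then show False using 0 by blast
  qed
  then show ?case using 0 by (simp add: card_le_Suc0_iff_eq)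
next
  case (Suc d)
  define b where "b x = ldim_ge {h\<in>H. h x} (Suc d)" for x
  define H' where "H' z = {h\<in>H. h z \<noteq> b z}" for z
  have nd: "\<not> (ldim_ge {h\<in>H. \<not> h x} (Suc d) \<and> ldim_ge {h\<in>H. h x} (Suc d))" for x
    using Suc.prems(1) ldim_S[of H "Suc d"] by blast
  have sub: "\<not> ldim_ge (H' z) (Suc d)" for z
  proof (cases "b z")
    case True
    then have "H' z = {h\<in>H. \<not> h z}" unfolding H'_def by auto
    then show ?thesis using nd[of z] True unfolding b_def by simp
  next
    case False
    then have "H' z = {h\<in>H. h z}" unfolding H'_def by auto
    then show ?thesis using False unfolding b_def by simp
  qed
  define G where "G = (2*m+1)^d"
  define Cz where "Cz z = {S\<in>C. (z, \<not> b z) \<in> S}" for z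
  have Czb: "card (Cz z) \<le> G" for z
  proof -
    define rm where "rm S = S - {(z, \<not> b z)}" for S :: "('a \<times> bool) set"
    have confrm: "conf (rm S1) (rm S2)" if "S1 \<in> Cz z" "S2 \<in> Cz z" "S1 \<noteq> S2" for S1 S2
    proof -
      have inC: "S1 \<in> C" "S2 \<in> C" using that(1,2) unfolding Cz_def by blast+
      have "conf S1 S2" using Suc.prems(4) inC that(3) unfolding pclique_def by blast
      then obtain x y where xy: "(x,y) \<in> S1" "(x, \<not> y) \<in> S2" unfolding conf_def by blast
      have c: "cons S1" "cons S2" using Suc.prems(3) inC rset_cons by blast+
      have i: "(z, \<not> b z) \<in> S1" "(z, \<not> b z) \<in> S2" using that unfolding Cz_def by blast+
      have "(x,y) \<noteq> (z, \<not> b z)"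
      proof
        assume e: "(x,y) = (z, \<not> b z)"
        then have "(z, b z) \<in> S2" using xy by simp
        then have "b z = (\<not> b z)" using i(2) consD[OF c(2)] by blast
        then show False by simp
      qed
      moreover have "(x,\<not> y) \<noteq> (z, \<not> b z)"
      proof
        assume e: "(x,\<not>y) = (z, \<not> b z)"
        then have "(z, b z) \<in> S1" using xy by simp
        then have "b z = (\<not> b z)" using i(1) consD[OF c(1)] by blast
        then show False by simp
      qed
      ultimately show ?thesis using xy unfolding conf_def rm_def by blast
    qed
    have consrm: "cons (rm S)" if "S \<in> C" for S
      using Suc.prems(3) that rset_cons cons_subset[of S "rm S"] unfolding rm_def by blast
    have inj: "inj_on rm (Cz z)"
    proof (rule inj_onI, rule ccontr)
      fix S1 S2 assume a: "S1 \<in> Cz z" "S2 \<in> Cz z" "rm S1 = rm S2" "S1 \<noteq> S2"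
      then have "conf (rm S1) (rm S1)" using confrm by metis
      moreover have "S1 \<in> C" using a unfolding Cz_def by auto
      ultimately show False using conf_self consrm by blast
    qed
    have "card (rm ` Cz z) \<le> G" unfolding G_def
    proof (rule Suc.IH[OF sub[of z]])
      show "finite (rm ` Cz z)" using Suc.prems(2) unfolding Cz_def by auto
      show "pclique (rm ` Cz z)" unfolding pclique_def using confrm by blast
      show "\<forall>S\<in>rm ` Cz z. finite S \<and> card (fst ` S) \<le> m \<and> rset (H' z) S"
      proof
        fix S assume "S \<in> rm ` Cz z"
        then obtain S0 where S0: "S0 \<in> C" "(z, \<not> b z) \<in> S0" "S = rm S0" unfolding Cz_def by blast
        have f0: "finite S0" "card (fst ` S0) \<le> m" "rset H S0" using Suc.prems(3) S0 by auto
        have "card (fst ` S) \<le> card (fst ` S0)"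
          using f0 S0 unfolding rm_def by (intro card_mono) auto
        moreover have "rset (H' z) S"
        proof -
          obtain h where h: "h \<in> H" "\<forall>p\<in>S0. h (fst p) = snd p" using f0 unfolding rset_def by blast
          then have "h z = (\<not> b z)" using S0 by force
          then show ?thesis using h S0 unfolding rset_def H'_def rm_def by auto
        qed
        ultimately show "finite S \<and> card (fst ` S) \<le> m \<and> rset (H' z) S"
          using f0 S0 unfolding rm_def by auto
      qed
    qed
    then show ?thesis using card_image[OF inj] by simp
  qed
  define N where "N = card C"
  define R where "R = Sigma C (\<lambda>S. \<Union>z\<in>fst ` S. Cz z)"
  define Od where "Od = Sigma C (\<lambda>S. C - {S})"
  have finC: "finite C" using Suc.prems(2) by auto
  have cardR: "card R \<le> N * (m * G)"
  proof -
    have fz: "finite (Cz z)" for z using finC unfolding Cz_def by auto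
    have finU: "finite (\<Union>z\<in>fst ` S. Cz z)" for S by (rule finite_subset[OF _ finC]) (auto simp: Cz_def)
    have bnd: "card (\<Union>z\<in>fst ` S. Cz z) \<le> m * G" if "S \<in> C" for S
    proof -
      have "card (\<Union>z\<in>fst ` S. Cz z) \<le> (\<Sum>z\<in>fst ` S. card (Cz z))" by (rule card_UN_le) (use Suc.prems(3) that in auto)
      also have "\<dots> \<le> (\<Sum>z\<in>fst ` S. G)" using Czb by (intro sum_mono) auto
      also have "\<dots> = card (fst ` S) * G" by simp
      also have "\<dots> \<le> m * G" using Suc.prems(3) that by auto
      finally show ?thesis .
    qed
    have eq: "card R = (\<Sum>S\<in>C. card (\<Union>z\<in>fst ` S. Cz z))"
      unfolding R_def using finC finU by (subst card_SigmaI) auto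
    have "(\<Sum>S\<in>C. card (\<Union>z\<in>fst ` S. Cz z)) \<le> (\<Sum>S\<in>C. m * G)"
      using bnd by (intro sum_mono)
    then show ?thesis using eq unfolding N_def by simp
  qed
  have cardO: "card Od = N * (N - 1)"
  proof -
    have "card Od = (\<Sum>S\<in>C. card (C - {S}))" unfolding Od_def using finC by (subst card_SigmaI) auto
    also have "\<dots> = (\<Sum>S\<in>C. N - 1)" unfolding N_def using finC by (intro sum.cong) auto
    also have "\<dots> = N * (N - 1)" unfolding N_def by simp
    finally show ?thesis .
  qed
  have OR: "Od \<subseteq> R \<union> R\<inverse>"
  proof
    fix p assume "p \<in> Od"
    then obtain S S' where p: "p = (S,S')" "S \<in> C" "S' \<in> C" "S \<noteq> S'" unfolding Od_def by auto
    then obtain x y where xy: "(x,y) \<in> S" "(x, \<not> y) \<in> S'"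
      using Suc.prems(4) unfolding pclique_def conf_def by blast
    show "p \<in> R \<union> R\<inverse>"
    proof (cases "y = b x")
      case True
      then have "S' \<in> Cz x" using xy p unfolding Cz_def by auto
      moreover have "x \<in> fst ` S" using xy by force
      ultimately show ?thesis using p unfolding R_def by auto
    next
      case False
      then have "S \<in> Cz x" using xy p unfolding Cz_def by (cases y) auto
      moreover have "x \<in> fst ` S'" using xy by force
      ultimately show ?thesis using p unfolding R_def by auto
    qed
  qed
  have finR: "finite R" unfolding R_def
  proof (rule finite_SigmaI[OF finC])
    fix S show "finite (\<Union>z\<in>fst ` S. Cz z)" by (rule finite_subset[OF _ finC]) (auto simp: Cz_def)
  qed
  have "card Od \<le> card (R \<union> R\<inverse>)" using OR finR by (intro card_mono) auto
  also have "\<dots> \<le> card R + card (R\<inverse>)" by (rule card_Un_le)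
  also have "\<dots> \<le> 2 * (N * (m * G))" using cardR by simp
  finally have ineq: "N * (N - 1) \<le> 2 * (N * (m * G))" using cardO by simp
  have "N \<le> 2 * m * G + 1"
  proof (cases N)
    case 0 then show ?thesis by simp
  next
    case (Suc n)
    then have "N * n \<le> N * (2 * m * G)" using ineq by (simp add: algebra_simps)
    moreover have "N > 0" using Suc by simp
    ultimately have "n \<le> 2 * m * G" using mult_le_cancel1[of N n "2*m*G"] by blast
    then show ?thesis using Suc by simp
  qed
  also have "\<dots> \<le> (2*m+1) * G" unfolding G_def by (simp add: algebra_simps)
  finally show ?case unfolding N_def G_def by simp
qed

lemma poly_abs_bound:
  fixes P :: "real poly" and x :: real
  assumes "x \<ge> 1"
  shows "poly P x \<le> (\<Sum>i\<le>degree P. \<bar>coeff P i\<bar>) * x ^ degree P"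
proof -
  have "poly P x = (\<Sum>i\<le>degree P. coeff P i * x ^ i)" by (simp add: poly_altdef)
  also have "\<dots> \<le> (\<Sum>i\<le>degree P. \<bar>coeff P i\<bar> * x ^ degree P)"
  proof (rule sum_mono)
    fix i assume "i \<in> {..degree P}"
    then have "x ^ i \<le> x ^ degree P" using assms by (intro power_increasing) auto
    moreover have "coeff P i * x ^ i \<le> \<bar>coeff P i\<bar> * x ^ i" using assms by (intro mult_right_mono) auto
    ultimately show "coeff P i * x ^ i \<le> \<bar>coeff P i\<bar> * x ^ degree P"
      by (meson abs_ge_zero mult_left_mono order_trans)
  qed
  also have "\<dots> = (\<Sum>i\<le>degree P. \<bar>coeff P i\<bar>) * x ^ degree P" by (simp add: sum_distrib_right)
  finally show ?thesis .
qed

lemma exp_beats_power: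
  fixes c :: real and n :: nat
  assumes "c \<ge> 0"
  shows "\<exists>m::nat. m \<ge> 1 \<and> c * real m ^ n < 2 ^ m"
proof -
  define L where "L = ln (2::real)"
  have L: "L > 0" unfolding L_def by simp
  have f: "filterlim (\<lambda>m::nat. L * real m) at_top sequentially"
    by (rule filterlim_tendsto_pos_mult_at_top[OF tendsto_const L filterlim_real_sequentially])
  have t: "((\<lambda>m::nat. (L * real m) ^ n / exp (L * real m)) \<longlongrightarrow> 0) sequentially"
    using filterlim_compose[OF tendsto_power_div_exp_0 f] by simp
  have eps: "L ^ n / (c + 1) > 0" using L assms by simp
  from order_tendstoD(2)[OF t eps] obtain m0 where
    m0: "\<And>m. m \<ge> m0 \<Longrightarrow> (L * real m) ^ n / exp (L * real m) < L ^ n / (c + 1)"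
    unfolding eventually_sequentially by blast
  define m where "m = max m0 1"
  have m1: "m \<ge> 1" "m \<ge> m0" unfolding m_def by auto
  have e: "exp (L * real m) = 2 ^ m"
  proof -
    have "exp (L * real m) = exp (real m * ln 2)" unfolding L_def by (simp add: mult.commute)
    also have "\<dots> = 2 powr real m" by (simp add: powr_def)
    also have "\<dots> = 2 ^ m" by (simp add: powr_realpow)
    finally show ?thesis .
  qed
  have "L ^ n * real m ^ n / 2 ^ m < L ^ n / (c + 1)"
    using m0[OF m1(2)] e by (simp add: power_mult_distrib)
  then have "L ^ n * real m ^ n * (c + 1) < L ^ n * 2 ^ m"
    using assms by (simp add: field_simps)
  then have "real m ^ n * (c + 1) < 2 ^ m"
    using L by (simp add: mult.assoc)
  then have "c * real m ^ n < 2 ^ m"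
    by (smt (verit, best) distrib_left mult.commute mult_cancel_left2 zero_le_power of_nat_0_le_iff)
  then show ?thesis using m1 by blast
qed

lemma no_poly_bound:
  fixes P :: "real poly"
  shows "\<exists>m::nat. poly P (real m) < 2 ^ m"
proof -
  define c where "c = (\<Sum>i\<le>degree P. \<bar>coeff P i\<bar>)"
  have "c \<ge> 0" unfolding c_def by (simp add: sum_nonneg)
  then obtain m :: nat where "m \<ge> 1" "c * real m ^ degree P < 2 ^ m" using exp_beats_power by blast
  moreover have "poly P (real m) \<le> c * real m ^ degree P"
    unfolding c_def using \<open>m \<ge> 1\<close> by (intro poly_abs_bound) auto
  ultimately have "poly P (real m) < 2 ^ m" by linarith
  then show ?thesis by blast
qed

lemma consistent_iff: "consistent h S \<longleftrightarrow> (\<forall>p\<in>set S. h (fst p) = snd p)"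
  by (simp add: consistent_def all_set_conv_all_nth)

lemma realizable_rset: "realizable H S \<longleftrightarrow> rset H (set S)"
  unfolding realizable_def rset_def consistent_iff by simp

lemma contradicts_conf: "contradicts S S' \<Longrightarrow> conf (set S) (set S')"
  unfolding contradicts_def conf_def by (metis (full_types))

lemma contradicts_mono:
  "contradicts S S' \<Longrightarrow> set S \<subseteq> set T \<Longrightarrow> set S' \<subseteq> set T' \<Longrightarrow> contradicts T T'"
  unfolding contradicts_def by blast

lemma clique_to_set:
  assumes "is_clique H m C" "finite C"
  shows "card (set ` C) = card C \<and> finite (set ` C) \<and>
    (\<forall>S\<in>set ` C. finite S \<and> card (fst ` S) \<le> m \<and> rset H S) \<and> pclique (set ` C)"
proof -
  have r: "\<forall>S\<in>C. length S = m \<and> rset H (set S)"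
    using assms unfolding is_clique_def realizable_datasets_def realizable_rset by blast
  have cf: "conf (set S1) (set S2)" if "S1 \<in> C" "S2 \<in> C" "S1 \<noteq> S2" for S1 S2
    using assms that unfolding is_clique_def by (blast intro: contradicts_conf)
  have inj: "inj_on set C"
  proof (rule inj_onI, rule ccontr)
    fix S1 S2 assume a: "S1 \<in> C" "S2 \<in> C" "set S1 = set S2" "S1 \<noteq> S2"
    then have "conf (set S1) (set S1)" using cf by metis
    then show False using conf_self rset_cons r a by blast
  qed
  have "card (fst ` S) \<le> m" if S: "S \<in> set ` C" for S
  proof -
    obtain S0 where "S0 \<in> C" "S = set S0" using S by blast
    then have "card (fst ` S) \<le> card S" "card S \<le> length S0" "length S0 = m"
      using r by (auto simp: card_image_le card_length)
    then show ?thesis by linarith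
  qed
  then show ?thesis using card_image[OF inj] assms(2) r cf unfolding pclique_def by auto
qed

lemma clique_card_2m:
  assumes "is_clique H m C" "finite C"
  shows "card C \<le> 2 ^ m"
proof -
  note cs = clique_to_set[OF assms]
  define D where "D = (\<Union>S\<in>set ` C. fst ` S)"
  have fD: "finite D" unfolding D_def using assms(2) by auto
  have el: "\<forall>S\<in>set ` C. finite S \<and> fst ` S \<subseteq> D \<and> cons S"
  proof
    fix S assume S: "S \<in> set ` C"
    then have "finite S" "rset H S" using cs by blast+
    moreover have "fst ` S \<subseteq> D" unfolding D_def using S by blast
    ultimately show "finite S \<and> fst ` S \<subseteq> D \<and> cons S" using rset_cons by blast
  qed
  have fin: "finite (set ` C)" and pc: "pclique (set ` C)" and cc: "card (set ` C) = card C"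
    using cs by blast+
  have k: "(\<Sum>S\<in>set ` C. (1/2::real) ^ card (fst ` S)) \<le> 1"
    using kraft[OF fD] fin el pc by blast
  have le: "(\<Sum>S\<in>set ` C. (1/2::real) ^ m) \<le> (\<Sum>S\<in>set ` C. (1/2::real) ^ card (fst ` S))"
  proof (rule sum_mono)
    fix S assume "S \<in> set ` C"
    then have "card (fst ` S) \<le> m" using cs by blast
    then show "(1/2::real) ^ m \<le> (1/2) ^ card (fst ` S)" by (rule power_decreasing) auto
  qed
  have "(\<Sum>S\<in>set ` C. (1/2::real) ^ m) = real (card C) * (1/2) ^ m" using cc by simp
  then have "real (card C) * (1/2) ^ m \<le> 1" using k le by linarith
  then have "real (card C) \<le> 2 ^ m" by (simp add: field_simps)
  then have "real (card C) \<le> real (2 ^ m)" by simp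
  then show ?thesis by (simp only: of_nat_le_iff)
qed

lemma clique_card_ldim:
  assumes "\<not> ldim_ge H (Suc d)" "is_clique H m C" "finite C"
  shows "card C \<le> (2*m+1) ^ d"
proof -
  note cs = clique_to_set[OF assms(2,3)]
  have "card (set ` C) \<le> (2*m+1) ^ d"
    using ldim_bound[OF assms(1)] cs by blast
  then show ?thesis using cs by simp
qed

lemma cn_upper:
  assumes "\<And>C. finite C \<Longrightarrow> is_clique H m C \<Longrightarrow> card C \<le> n"
  shows "\<exists>k. clique_number H m = enat k \<and> k \<le> n"
proof -
  have le: "clique_number H m \<le> enat n"
    unfolding clique_number_def using assms by (intro Sup_least) auto
  then obtain k where k: "clique_number H m = enat k" by (cases "clique_number H m") auto
  then show ?thesis using le by auto
qed

lemma ldim_clique: "ldim_ge H m \<Longrightarrow> \<exists>C. finite C \<and> is_clique H m C \<and> card C = 2 ^ m"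
proof (induction m arbitrary: H)
  case 0
  then have "H \<noteq> {}" unfolding ldim_0 .
  then have "is_clique H 0 {[]}"
    unfolding is_clique_def realizable_datasets_def realizable_def consistent_def by auto
  then show ?case by (intro exI[of _ "{[]}"]) auto
next
  case (Suc m)
  then obtain x where x: "ldim_ge {h\<in>H. \<not> h x} m" "ldim_ge {h\<in>H. h x} m" unfolding ldim_S by blast
  obtain C0 where C0: "finite C0" "is_clique {h\<in>H. \<not> h x} m C0" "card C0 = 2 ^ m"
    using Suc.IH[OF x(1)] by blast
  obtain C1 where C1: "finite C1" "is_clique {h\<in>H. h x} m C1" "card C1 = 2 ^ m"
    using Suc.IH[OF x(2)] by blast
  define C where "C = (\<lambda>S. (x,False) # S) ` C0 \<union> (\<lambda>S. (x,True) # S) ` C1"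
  have fin: "finite C" unfolding C_def using C0 C1 by auto
  have "card C = card ((\<lambda>S. (x,False) # S) ` C0) + card ((\<lambda>S. (x,True) # S) ` C1)"
    unfolding C_def using C0 C1 by (intro card_Un_disjoint) auto
  also have "\<dots> = 2 ^ Suc m"
    using C0 C1 by (simp add: card_image inj_on_def)
  finally have card: "card C = 2 ^ Suc m" .
  have real: "C \<subseteq> realizable_datasets H (Suc m)"
  proof
    fix S assume "S \<in> C"
    then consider (a) S0 where "S0 \<in> C0" "S = (x,False) # S0" | (b) S0 where "S0 \<in> C1" "S = (x,True) # S0"
      unfolding C_def by blast
    then show "S \<in> realizable_datasets H (Suc m)"
    proof cases
      case a
      then have "length S0 = m" "\<exists>h\<in>{h\<in>H. \<not> h x}. consistent h S0"
        using C0 unfolding is_clique_def realizable_datasets_def realizable_def by auto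
      then show ?thesis using a unfolding realizable_datasets_def realizable_def consistent_iff by auto
    next
      case b
      then have "length S0 = m" "\<exists>h\<in>{h\<in>H. h x}. consistent h S0"
        using C1 unfolding is_clique_def realizable_datasets_def realizable_def by auto
      then show ?thesis using b unfolding realizable_datasets_def realizable_def consistent_iff by auto
    qed
  qed
  have pw: "contradicts S S'" if SC: "S \<in> C" "S' \<in> C" and ne: "S \<noteq> S'" for S S'
  proof -
    have cross: "contradicts ((x,False) # A) ((x,True) # B)" "contradicts ((x,True) # B) ((x,False) # A)" for A B
      unfolding contradicts_def by auto
    have in0: "contradicts ((x,b) # A) ((x,b) # B)" if "contradicts A B" for A B b
      using that by (meson contradicts_mono set_subset_Cons)
    have p0: "contradicts A B" if "A \<in> C0" "B \<in> C0" "A \<noteq> B" for A B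
      using C0(2) that unfolding is_clique_def by blast
    have p1: "contradicts A B" if "A \<in> C1" "B \<in> C1" "A \<noteq> B" for A B
      using C1(2) that unfolding is_clique_def by blast
    consider (FF) A B where "A \<in> C0" "B \<in> C0" "S = (x,False) # A" "S' = (x,False) # B"
      | (TT) A B where "A \<in> C1" "B \<in> C1" "S = (x,True) # A" "S' = (x,True) # B"
      | (FT) A B where "S = (x,False) # A" "S' = (x,True) # B"
      | (TF) A B where "S = (x,True) # A" "S' = (x,False) # B"
      using SC unfolding C_def by blast
    then show ?thesis
    proof cases
      case FF
      then have "A \<noteq> B" using ne by blast
      then show ?thesis using p0 in0 FF by blast
    next
      case TT
      then have "A \<noteq> B" using ne by blast
      then show ?thesis using p1 in0 TT by blast
    next
      case FT then show ?thesis using cross by blast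
    next
      case TF then show ?thesis using cross by blast
    qed
  qed
  have "is_clique H (Suc m) C" unfolding is_clique_def using real pw by blast
  then show ?case using fin card by blast
qed

theorem mainTheorem2:
  fixes H :: "('x \<Rightarrow> bool) set"
  defines "A \<equiv> (\<forall>m::nat. clique_number H m = enat (2 ^ m))"
      and "B \<equiv> (\<exists>P :: real poly. \<forall>m::nat.
                 \<exists>k::nat. clique_number H m = enat k \<and> real k \<le> poly P (real m))"
  shows "(A \<or> B) \<and> \<not> (A \<and> B)"
proof
  show "\<not> (A \<and> B)"
  proof
    assume AB: "A \<and> B"
    then obtain P :: "real poly" where P: "\<forall>m::nat. \<exists>k::nat. clique_number H m = enat k \<and> real k \<le> poly P (real m)"
      unfolding B_def by blast
    obtain m :: nat where m: "poly P (real m) < 2 ^ m" using no_poly_bound by blast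
    obtain k where k: "clique_number H m = enat k" "real k \<le> poly P (real m)" using P by blast
    have "k = 2 ^ m" using AB k unfolding A_def by simp
    then show False using k m by simp
  qed
next
  show "A \<or> B"
  proof (cases "\<forall>d. ldim_ge H d")
    case True
    have "clique_number H m = enat (2 ^ m)" for m
    proof -
      obtain C where C: "finite C" "is_clique H m C" "card C = 2 ^ m" using ldim_clique[of H m] True by blast
      obtain k where k: "clique_number H m = enat k" "k \<le> 2 ^ m"
        using cn_upper[where m=m and H=H and n="2 ^ m"] clique_card_2m by blast
      have "enat (card C) \<in> {enat (card C) | C. finite C \<and> is_clique H m C}" using C(1,2) by blast
      then have "enat (card C) \<le> clique_number H m" unfolding clique_number_def by (rule Sup_upper)
      then have "enat (2 ^ m) \<le> clique_number H m" using C(3) by simp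
      then show ?thesis using k by simp
    qed
    then show ?thesis unfolding A_def by blast
  next
    case False
    then obtain d where "\<not> ldim_ge H d" by blast
    then have nd: "\<not> ldim_ge H (Suc d)" using ldim_Suc_mono by blast
    have "\<exists>k::nat. clique_number H m = enat k \<and> real k \<le> poly ([:1,2:] ^ d) (real m)" for m
    proof -
      obtain k where k: "clique_number H m = enat k" "k \<le> (2*m+1) ^ d"
        using cn_upper[where m=m and H=H and n="(2*m+1)^d"] clique_card_ldim[OF nd] by blast
      have "real k \<le> real ((2*m+1) ^ d)" using k by linarith
      also have "\<dots> = poly ([:1,2:] ^ d) (real m)" by (simp add: poly_power mult.commute)
      finally show ?thesis using k by blast
    qed
    then show ?thesis unfolding B_def by blast
  qed
qed

end
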